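(* Let $0<m<L$, $\alpha>0$, $\delta\in(0,1)$, and $\rho_\mathrm{GD}(\delta)=\max(1-\alpha m(1-\delta),\ \alpha L(1+\delta)-1)$. Define for $t,\lambda\in\mathbb{R}$ \[ F(t,\lambda) = -\alpha^2(L-m)^2+2mL\alpha^2\lambda(1-\delta^2) +2\alpha\lambda(m+L)(t-1) + \lambda(2-\delta^2\lambda)(t-1)^2, \] and \[ \rho_\star=\inf\{\rho\ge\rho_\mathrm{GD}(\delta):\ F(\rho,\lambda)\ge0 \text{ and } F(-\rho,\lambda)\ge0 \text{ for some }\lambda\in[0,2/\delta^2]\}. \] Let $\lambda_\star\in[0,2/\delta^2]$ be any number with $F(\rho_\star,\lambda_\star)\ge0$ and $F(-\rho_\star,\lambda_\star)\ge0$. Then: (1) $\min(F(\rho_\star,\lambda_\star),F(-\rho_\star,\lambda_\star))=0$; (2) $\lambda_\star\in(0,2/\delta^2)$; (3) if $\max(F(\rho_\star,\lambda_\star),F(-\rho_\star,\lambda_\star))>0$, then $\rho_\star=\rho_\mathrm{GD}(\delta)$.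
   Context: The infimum defining $\rho_\star$ is over a nonempty set, so $\rho_\star$ is finite, and by continuity of $F$ a number $\lambda_\star$ as in the statement exists. *)

theory Defs
  imports Complex_Main
begin

definition rho_GD :: "real \<Rightarrow> real \<Rightarrow> real \<Rightarrow> real \<Rightarrow> real" where
  "rho_GD m L \<alpha> \<delta> = max (1 - \<alpha> * m * (1 - \<delta>)) (\<alpha> * L * (1 + \<delta>) - 1)"

definition F :: "real \<Rightarrow> real \<Rightarrow> real \<Rightarrow> real \<Rightarrow> real \<Rightarrow> real \<Rightarrow> real" where
  "F m L \<alpha> \<delta> t lam =
     - (\<alpha>^2 * (L - m)^2) + 2 * m * L * \<alpha>^2 * lam * (1 - \<delta>^2)
     + 2 * \<alpha> * lam * (m + L) * (t - 1) + lam * (2 - \<delta>^2 * lam) * (t - 1)^2"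

definition rho_star :: "real \<Rightarrow> real \<Rightarrow> real \<Rightarrow> real \<Rightarrow> real" where
  "rho_star m L \<alpha> \<delta> = Inf {\<rho>. \<rho> \<ge> rho_GD m L \<alpha> \<delta> \<and>
      (\<exists>lam\<in>{0..2 / \<delta>^2}. F m L \<alpha> \<delta> \<rho> lam \<ge> 0 \<and> F m L \<alpha> \<delta> (-\<rho>) lam \<ge> 0)}"

end

theory Submission
  imports Defs
begin

lemma cont_pos:
  fixes f :: "real \<Rightarrow> real"
  assumes "isCont f x" "f x > 0"
  shows "\<exists>d>0. \<forall>y. \<bar>y - x\<bar> < d \<longrightarrow> f y > 0"
proof -
  from LIM_fun_gt_zero[of f "f x" x] assms obtain r where r: "r > 0"
    "\<forall>y. y \<noteq> x \<and> \<bar>x - y\<bar> < r \<longrightarrow> 0 < f y"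
    by (auto simp: isCont_def)
  show ?thesis using r assms(2) by (intro exI[of _ r]) (auto simp: abs_minus_commute)
qed

lemma sign_change:
  fixes f g :: "real \<Rightarrow> real"
  assumes "DERIV f x :> d" "d \<noteq> 0" "f x = 0" "isCont g x" "g x > 0" "a < x" "x < b"
  shows "\<exists>y\<in>{a..b}. f y > 0 \<and> g y > 0"
proof -
  obtain e2 where e2: "e2 > 0" "\<forall>y. \<bar>y - x\<bar> < e2 \<longrightarrow> g y > 0"
    using cont_pos[OF assms(4,5)] by blast
  show ?thesis
  proof (cases "d > 0")
    case True
    then obtain e1 where e1: "e1 > 0" "\<forall>h>0. h < e1 \<longrightarrow> f x < f (x + h)"
      using DERIV_pos_inc_right[OF assms(1)] by blast
    define h where "h = min e1 (min e2 (b - x)) / 2"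
    have h: "h > 0" "h < e1" "h < e2" "h < b - x" using e1 e2 assms by (auto simp: h_def)
    show ?thesis using e1(2) e2(2) h assms(3,6)
      by (intro bexI[of _ "x + h"]) auto
  next
    case False
    then have "d < 0" using assms(2) by simp
    then obtain e1 where e1: "e1 > 0" "\<forall>h>0. h < e1 \<longrightarrow> f x < f (x - h)"
      using DERIV_neg_dec_left[OF assms(1)] by blast
    define h where "h = min e1 (min e2 (x - a)) / 2"
    have h: "h > 0" "h < e1" "h < e2" "h < x - a" using e1 e2 assms by (auto simp: h_def)
    show ?thesis using e1(2) e2(2) h assms(3,7)
      by (intro bexI[of _ "x - h"]) auto
  qed
qed

lemma F_rho1:
  "F m L \<alpha> \<delta> (1 - \<alpha> * m * (1 - \<delta>)) lam = - (\<alpha>^2 * ((L - m) - lam * \<delta> * m * (1 - \<delta>))^2)"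
  unfolding F_def by (simp add: power2_eq_square algebra_simps)

lemma F_rho2:
  "F m L \<alpha> \<delta> (- (\<alpha> * L * (1 + \<delta>) - 1)) lam = - (\<alpha>^2 * ((L - m) - lam * \<delta> * L * (1 + \<delta>))^2)"
  unfolding F_def by (simp add: power2_eq_square algebra_simps)

lemma F_deriv:
  "DERIV (F m L \<alpha> \<delta> t) lam :> (2 * m * L * \<alpha>^2 * (1 - \<delta>^2) + 2 * \<alpha> * (m + L) * (t - 1)
      + 2 * (t - 1)^2 - 2 * \<delta>^2 * lam * (t - 1)^2)"
  unfolding F_def[abs_def]
  by (auto intro!: derivative_eq_intros simp: algebra_simps power2_eq_square)

lemma F_cont: "isCont (F m L \<alpha> \<delta> t) lam" "isCont (\<lambda>t. F m L \<alpha> \<delta> t lam) x"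
  "isCont (\<lambda>t. F m L \<alpha> \<delta> (-t) lam) x"
  unfolding F_def[abs_def] by (auto intro!: continuous_intros)

lemma crit:
  assumes "0 < m" "m < L" "\<alpha> > 0" "0 < \<delta>" "\<delta> < 1" "lam > 0"
    and "F m L \<alpha> \<delta> t lam = 0"
    and "2 * m * L * \<alpha>^2 * (1 - \<delta>^2) + 2 * \<alpha> * (m + L) * (t - 1)
      + 2 * (t - 1)^2 - 2 * \<delta>^2 * lam * (t - 1)^2 = 0"
  shows "t = 1 - \<alpha> * m * (1 - \<delta>) \<or> t = - (\<alpha> * L * (1 + \<delta>) - 1)"
proof -
  define u where "u = t - 1"
  define B where "B = 2 * m * L * \<alpha>^2 * (1 - \<delta>^2) + 2 * \<alpha> * (m + L) * u + 2 * u^2"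
  have dB: "B = 2 * \<delta>^2 * lam * u^2" using assms(8) by (simp add: B_def u_def)
  have "F m L \<alpha> \<delta> t lam = - (\<alpha>^2 * (L - m)^2) + lam * B - \<delta>^2 * lam^2 * u^2"
    unfolding F_def B_def u_def by (simp add: algebra_simps power2_eq_square)
  with assms(7) dB have "(\<delta> * lam * u)^2 = (\<alpha> * (L - m))^2"
    by (simp add: power2_eq_square algebra_simps)
  then have "\<delta> * lam * u = \<alpha> * (L - m) \<or> \<delta> * lam * u = - (\<alpha> * (L - m))"
    using power2_eq_iff by blast
  then show ?thesis
  proof
    assume h: "\<delta> * lam * u = \<alpha> * (L - m)"
    have "\<delta> * lam * u > 0" using h assms by simp
    moreover have "\<delta> * lam > 0" using assms by simp
    ultimately have "u > 0" by (metis zero_less_mult_iff not_less_iff_gr_or_eq)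
    have "B = 2 * \<delta> * (\<delta> * lam * u) * u" using dB by (simp add: power2_eq_square algebra_simps)
    also have "\<dots> = 2 * \<alpha> * \<delta> * (L - m) * u" using h by simp
    finally have "2 * (u + \<alpha> * L * (1 - \<delta>)) * (u + \<alpha> * m * (1 + \<delta>)) = 0"
      unfolding B_def by (simp add: algebra_simps power2_eq_square)
    moreover have "u + \<alpha> * L * (1 - \<delta>) > 0" "u + \<alpha> * m * (1 + \<delta>) > 0"
      using \<open>u > 0\<close> assms by (simp_all add: add_pos_pos)
    ultimately show ?thesis by simp
  next
    assume h: "\<delta> * lam * u = - (\<alpha> * (L - m))"
    have "B = 2 * \<delta> * (\<delta> * lam * u) * u" using dB by (simp add: power2_eq_square algebra_simps)
    also have "\<dots> = - (2 * \<alpha> * \<delta> * (L - m) * u)" using h by simp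
    finally have "2 * (u + \<alpha> * L * (1 + \<delta>)) * (u + \<alpha> * m * (1 - \<delta>)) = 0"
      unfolding B_def by (simp add: algebra_simps power2_eq_square)
    then have "u + \<alpha> * L * (1 + \<delta>) = 0 \<or> u + \<alpha> * m * (1 - \<delta>) = 0" by (simp only: mult_eq_0_iff) linarith
    then show ?thesis unfolding u_def by (auto simp: algebra_simps)
  qed
qed


lemma F_big:
  assumes "0 < m" "m < L" "\<alpha> > 0" "0 < \<delta>" "\<delta> < 1"
    and "u \<ge> \<alpha> * (L - m) \<or> u \<le> - (2 * \<alpha> * (m + L) + \<alpha> * (L - m))"
  shows "F m L \<alpha> \<delta> (1 + u) (1 / \<delta>^2) \<ge> 0"
proof -
  have d2: "\<delta>^2 > 0" "\<delta>^2 < 1" using assms by (auto simp: power_less_one_iff)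
  have eq: "F m L \<alpha> \<delta> (1 + u) (1 / \<delta>^2) * \<delta>^2 =
    - (\<alpha>^2 * (L - m)^2 * \<delta>^2) + 2 * m * L * \<alpha>^2 * (1 - \<delta>^2) + 2 * \<alpha> * (m + L) * u + u^2"
    unfolding F_def using d2 assms(4) by (simp add: field_simps power2_eq_square)
  have p1: "2 * m * L * \<alpha>^2 * (1 - \<delta>^2) \<ge> 0" using assms d2 by simp
  have p2: "(\<alpha>^2 * (L - m)^2) * \<delta>^2 \<le> \<alpha>^2 * (L - m)^2"
    using d2 by (simp add: mult_left_le)
  have "2 * \<alpha> * (m + L) * u + u^2 \<ge> (\<alpha> * (L - m))^2"
    using assms(6)
  proof
    assume h: "u \<ge> \<alpha> * (L - m)"
    have "0 \<le> \<alpha> * (L - m)" using assms by simp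
    then have "(\<alpha> * (L - m))^2 \<le> u^2" using h power_mono by blast
    moreover have "2 * \<alpha> * (m + L) * u \<ge> 0" using assms h \<open>0 \<le> \<alpha> * (L - m)\<close> by (intro mult_nonneg_nonneg) (auto intro: order_trans[OF \<open>0 \<le> \<alpha> * (L - m)\<close>])
    ultimately show ?thesis by linarith
  next
    assume h: "u \<le> - (2 * \<alpha> * (m + L) + \<alpha> * (L - m))"
    define v where "v = -u"
    have p: "\<alpha> * (m + L) \<ge> 0" "\<alpha> * (L - m) \<ge> 0" using assms by auto
    have "v - 2 * \<alpha> * (m + L) \<ge> \<alpha> * (L - m)" "v \<ge> \<alpha> * (L - m)" "\<alpha> * (L - m) \<ge> 0"
      using h p unfolding v_def by linarith+
    then have "(\<alpha> * (L - m)) * (\<alpha> * (L - m)) \<le> v * (v - 2 * \<alpha> * (m + L))"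
      by (meson mult_mono order_trans)
    then show ?thesis by (simp add: v_def power2_eq_square algebra_simps)
  qed
  then have ge: "\<alpha>^2 * (L - m)^2 \<le> 2 * \<alpha> * (m + L) * u + u^2" by (simp add: power_mult_distrib)
  have "F m L \<alpha> \<delta> (1 + u) (1 / \<delta>^2) * \<delta>^2 \<ge> 0"
    unfolding eq using p1 p2 ge by linarith
  then show ?thesis using d2 by (simp add: zero_le_mult_iff)
qed

lemma F_top:
  assumes "0 < m" "m < L" "\<alpha> > 0" "0 < \<delta>" "\<delta> < 1"
    and "r + 1 \<ge> \<alpha> * L * (1 + \<delta>)"
  shows "F m L \<alpha> \<delta> (-r) (2 / \<delta>^2) < 0"
proof -
  have d2: "\<delta>^2 > 0" using assms by auto
  have eq: "F m L \<alpha> \<delta> (-r) (2 / \<delta>^2) * \<delta>^2 =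
    - (\<alpha>^2 * (L - m)^2 * \<delta>^2) + 4 * \<alpha> * (m * L * \<alpha> * (1 - \<delta>^2) - (m + L) * (r + 1))"
    unfolding F_def using d2 assms(4) by (simp add: field_simps power2_eq_square)
  have "(m + L) * (r + 1) \<ge> (m + L) * (\<alpha> * L * (1 + \<delta>))"
    using assms by (intro mult_left_mono) simp_all
  moreover have "m * L * \<alpha> * (1 - \<delta>^2) < (m + L) * (\<alpha> * L * (1 + \<delta>))"
  proof -
    have "m * L * \<alpha> * (1 - \<delta>^2) = (m * (1 - \<delta>)) * (\<alpha> * L * (1 + \<delta>))"
      by (simp add: power2_eq_square algebra_simps)
    also have "\<dots> < (m + L) * (\<alpha> * L * (1 + \<delta>))"
    proof (rule mult_strict_right_mono)
      have "0 < \<delta> * m" using assms by simp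
      moreover have "m * (1 - \<delta>) = m - \<delta> * m" by (simp add: algebra_simps)
      ultimately show "m * (1 - \<delta>) < m + L" using assms by linarith
      show "0 < \<alpha> * L * (1 + \<delta>)" using assms by simp
    qed
    finally show ?thesis .
  qed
  ultimately have neg: "m * L * \<alpha> * (1 - \<delta>^2) - (m + L) * (r + 1) < 0" by linarith
  have n2: "4 * \<alpha> * (m * L * \<alpha> * (1 - \<delta>^2) - (m + L) * (r + 1)) < 0"
    using neg assms(3) by (simp add: mult_pos_neg)
  have n3: "\<alpha>^2 * (L - m)^2 * \<delta>^2 \<ge> 0" by simp
  have "F m L \<alpha> \<delta> (-r) (2 / \<delta>^2) * \<delta>^2 < 0"
    unfolding eq using n2 n3 by linarith
  then show ?thesis using d2 by (simp add: mult_less_0_iff)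
qed

theorem lemma3p1:
  fixes m L \<alpha> \<delta> lams :: real
  assumes "0 < m" and "m < L" and "\<alpha> > 0" and "0 < \<delta>" and "\<delta> < 1"
    and "lams \<in> {0..2 / \<delta>^2}"
    and "F m L \<alpha> \<delta> (rho_star m L \<alpha> \<delta>) lams \<ge> 0"
    and "F m L \<alpha> \<delta> (- rho_star m L \<alpha> \<delta>) lams \<ge> 0"
  shows "min (F m L \<alpha> \<delta> (rho_star m L \<alpha> \<delta>) lams) (F m L \<alpha> \<delta> (- rho_star m L \<alpha> \<delta>) lams) = 0
    \<and> lams \<in> {0<..<2 / \<delta>^2}
    \<and> (max (F m L \<alpha> \<delta> (rho_star m L \<alpha> \<delta>) lams) (F m L \<alpha> \<delta> (- rho_star m L \<alpha> \<delta>) lams) > 0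
         \<longrightarrow> rho_star m L \<alpha> \<delta> = rho_GD m L \<alpha> \<delta>)"
proof -
  define S where "S = {\<rho>. \<rho> \<ge> rho_GD m L \<alpha> \<delta> \<and>
      (\<exists>lam\<in>{0..2 / \<delta>^2}. F m L \<alpha> \<delta> \<rho> lam \<ge> 0 \<and> F m L \<alpha> \<delta> (-\<rho>) lam \<ge> 0)}"
  define rs where "rs = rho_star m L \<alpha> \<delta>"
  define rg where "rg = rho_GD m L \<alpha> \<delta>"
  define FF where "FF = F m L \<alpha> \<delta>"
  define r1 where "r1 = 1 - \<alpha> * m * (1 - \<delta>)"
  define r2 where "r2 = \<alpha> * L * (1 + \<delta>) - 1"
  have rs_def': "rs = Inf S" unfolding rs_def S_def rho_star_def by simp
  have r1g: "r1 \<le> rg" and r2g: "r2 \<le> rg" unfolding r1_def r2_def rg_def rho_GD_def by auto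
  have d2: "\<delta>^2 > 0" using assms by simp
  have "\<alpha> * m * \<delta> > 0" "\<alpha> * L * \<delta> > 0" "\<alpha> * m < \<alpha> * L" using assms by auto
  then have r12: "- r2 < r1" "- r1 < r2" unfolding r1_def r2_def by (auto simp: algebra_simps)
  define w where "w = 1 + 2 * \<alpha> * (m + L) + \<alpha> * (L - m) + \<bar>rg\<bar>"
  have "w \<in> S"
  proof -
    have "1 / \<delta>^2 \<in> {0..2 / \<delta>^2}" using d2 by (auto simp: divide_right_mono)
    moreover have "w - 1 \<ge> \<alpha> * (L - m)" "\<alpha> * (m + L) \<ge> 0" unfolding w_def using assms by auto
    moreover have "FF w (1 / \<delta>^2) \<ge> 0"
      using F_big[OF assms(1-5), of "w - 1"] calculation(2) unfolding FF_def by simp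
    moreover have wneg: "- w - 1 \<le> - (2 * \<alpha> * (m + L) + \<alpha> * (L - m))" unfolding w_def by simp
    moreover have "FF (-w) (1 / \<delta>^2) \<ge> 0"
      using F_big[OF assms(1-5), of "- w - 1"] wneg unfolding FF_def by simp
    moreover have q: "2 * \<alpha> * (m + L) \<ge> 0" "\<alpha> * (L - m) \<ge> 0" using assms by auto
    moreover have "w \<ge> rg" unfolding w_def using q by linarith
    ultimately show ?thesis unfolding S_def FF_def rg_def by blast
  qed
  then have ne: "S \<noteq> {}" by blast
  have bdd: "bdd_below S" unfolding S_def bdd_below_def by blast
  have low: "rs \<le> x" if "x \<in> S" for x unfolding rs_def' using cInf_lower[OF that bdd] .
  have ge: "rs \<ge> rg" unfolding rs_def' using cInf_greatest[OF ne] unfolding S_def rg_def by blast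
  have C: False if hC: "rs > rg" "l \<in> {0..2 / \<delta>^2}" "FF rs l > 0" "FF (-rs) l > 0" for l
  proof -
    obtain d1 where d1: "d1 > 0" "\<forall>y. \<bar>y - rs\<bar> < d1 \<longrightarrow> FF y l > 0"
      using cont_pos[OF F_cont(2) hC(3)[unfolded FF_def]] unfolding FF_def by blast
    obtain d3 where d3: "d3 > 0" "\<forall>y. \<bar>y - rs\<bar> < d3 \<longrightarrow> FF (-y) l > 0"
      using cont_pos[where f="\<lambda>t. F m L \<alpha> \<delta> (-t) l", OF F_cont(3)] hC(4) unfolding FF_def by auto
    define mm where "mm = min d1 (min d3 (rs - rg))"
    have mm: "mm > 0" "mm \<le> d1" "mm \<le> d3" "mm \<le> rs - rg" using d1 d3 hC(1) by (auto simp: mm_def)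
    define y where "y = rs - mm / 2"
    have y: "y < rs" "\<bar>y - rs\<bar> < d1" "\<bar>y - rs\<bar> < d3" "y \<ge> rg"
      using mm unfolding y_def by auto
    have "y \<in> S" unfolding S_def using y d1 d3 hC(2) unfolding FF_def rg_def
      by (intro CollectI conjI bexI[of _ l]) (auto intro: less_imp_le)
    then show False using low y by fastforce
  qed
  have ne_rg: "min (FF rg l) (FF (-rg) l) \<le> 0" for l
  proof (cases "rg = r1")
    case True
    then show ?thesis unfolding FF_def r1_def using F_rho1[of m L \<alpha> \<delta> l]
      by (simp add: min_le_iff_disj)
  next
    case False
    then have "rg = r2" unfolding rg_def r1_def r2_def rho_GD_def by (metis max_def)
    then show ?thesis unfolding FF_def r2_def using F_rho2[of m L \<alpha> \<delta> l]
      by (simp add: min_le_iff_disj)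
  qed
  have a6: "0 \<le> lams" "lams \<le> 2 / \<delta>^2" using assms(6) by auto
  have a7: "FF rs lams \<ge> 0" "FF (-rs) lams \<ge> 0" using assms(7,8) unfolding FF_def rs_def by auto
  have lpos: "lams > 0"
  proof (rule ccontr)
    assume "\<not> lams > 0"
    then have "lams = 0" using a6 by simp
    then have "FF rs lams = - (\<alpha>^2 * (L - m)^2)" unfolding FF_def F_def by simp
    moreover have "\<alpha>^2 * (L - m)^2 > 0" using assms by simp
    ultimately show False using a7 by simp
  qed
  have ltop: "lams < 2 / \<delta>^2"
  proof (rule ccontr)
    assume "\<not> lams < 2 / \<delta>^2"
    then have "lams = 2 / \<delta>^2" using a6 by simp
    moreover have "rs + 1 \<ge> \<alpha> * L * (1 + \<delta>)" using ge r2g unfolding r2_def by simp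
    ultimately have "FF (-rs) lams < 0" using F_top[OF assms(1-5)] unfolding FF_def by blast
    then show False using a7 by simp
  qed
  have p1: "min (FF rs lams) (FF (-rs) lams) = 0"
  proof (rule ccontr)
    assume "min (FF rs lams) (FF (-rs) lams) \<noteq> 0"
    then have pos: "FF rs lams > 0" "FF (-rs) lams > 0" using a7 by auto
    have "rs \<noteq> rg" using ne_rg[of lams] pos by auto
    then show False using C[of lams] ge pos assms(6) by simp
  qed
  have p3: "rs = rg" if mx: "max (FF rs lams) (FF (-rs) lams) > 0"
  proof (rule ccontr)
    assume "rs \<noteq> rg"
    then have gt: "rs > rg" using ge by simp
    have lint: "0 < lams" "lams < 2 / \<delta>^2" using lpos ltop by auto
    have key: "\<exists>y\<in>{0..2 / \<delta>^2}. FF s y > 0 \<and> FF s' y > 0"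
      if z: "FF s lams = 0" and o: "FF s' lams > 0" and s: "s \<noteq> r1" "s \<noteq> - r2" for s s'
    proof -
      define dd where "dd = 2 * m * L * \<alpha>^2 * (1 - \<delta>^2) + 2 * \<alpha> * (m + L) * (s - 1)
        + 2 * (s - 1)^2 - 2 * \<delta>^2 * lams * (s - 1)^2"
      have "dd \<noteq> 0"
        using crit[OF assms(1-5) lpos z[unfolded FF_def]] s unfolding dd_def r1_def r2_def by blast
      from sign_change[OF F_deriv[of m L \<alpha> \<delta> s lams, folded dd_def] this z[unfolded FF_def]
          F_cont(1)[where m=m and L=L and \<alpha>=\<alpha> and \<delta>=\<delta> and t=s' and lam=lams] o[unfolded FF_def] lint]
      show ?thesis unfolding FF_def .
    qed
    have "FF rs lams = 0 \<and> FF (-rs) lams > 0 \<or> FF (-rs) lams = 0 \<and> FF rs lams > 0"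
      using p1 mx by (auto simp: min_def max_def split: if_splits)
    then show False
    proof
      assume h: "FF rs lams = 0 \<and> FF (-rs) lams > 0"
      have "rs \<noteq> r1" "rs \<noteq> - r2" using gt r1g r12 by auto
      then obtain y where "y \<in> {0..2 / \<delta>^2}" "FF rs y > 0" "FF (-rs) y > 0"
        using key[of rs "-rs"] h by blast
      then show False using C gt by blast
    next
      assume h: "FF (-rs) lams = 0 \<and> FF rs lams > 0"
      have "-rs \<noteq> r1" "-rs \<noteq> - r2" using gt r2g r12 by auto
      then obtain y where "y \<in> {0..2 / \<delta>^2}" "FF (-rs) y > 0" "FF rs y > 0"
        using key[of "-rs" rs] h by blast
      then show False using C gt by blast
    qed
  qed
  show ?thesis using p1 p3 lpos ltop unfolding FF_def rs_def rg_def by auto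
qed

end
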